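(* Let $2\le t\le n$. Then for all $s\ge1$, $\mathrm{Ass}(S/I_t(L_n)^s)=\{\mathfrak p_F: F\in C_{n,t}\}$.
   Context: $K$ is a field, $S=K[x_1,\ldots,x_n]$, $I_t(L_n)=(u_1,\ldots,u_{n-t+1})$ with $u_i=x_ix_{i+1}\cdots x_{i+t-1}$, and $\mathfrak p_F=(x_i:i\in F)$. $C_{n,t}$ is the set of subsets $\{i_1<\cdots<i_r\}\subseteq[n]$ with: (1) $1\le i_1\le t$; (2) $i_2>t$; (3) $1\le i_{j+1}-i_j\le t$ for $1\le j\le r-1$; (4) $i_{j+2}-i_j>t$ for $1\le j\le r-2$; (5) $i_{r-1}<n-t+1$; (6) $n-t+1\le i_r\le n$ (conditions referring to nonexistent indices are vacuous). *)

theory Defs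
  imports "HOL-Library.Poly_Mapping"
begin

text \<open>Polynomials over a field K in variables indexed by nat; a monomial is
 an exponent vector (finitely supported nat-to-nat map).\<close>
type_synonym 'a mpoly = "(nat \<Rightarrow>\<^sub>0 nat) \<Rightarrow>\<^sub>0 'a"

text \<open>S = K[x_1,...,x_n]: polynomials only involving variables x_1..x_n.\<close>
definition polyS :: "nat \<Rightarrow> 'a::field mpoly set" where
  "polyS n = {p. \<forall>m \<in> Poly_Mapping.keys p. Poly_Mapping.keys m \<subseteq> {1..n}}"

definition var :: "nat \<Rightarrow> 'a::field mpoly" where
  "var i = Poly_Mapping.single (Poly_Mapping.single i 1) 1"

definition gen_ideal :: "nat \<Rightarrow> 'a::field mpoly set \<Rightarrow> 'a mpoly set" where
  "gen_ideal n G = {p. \<exists>A c. finite A \<and> A \<subseteq> G \<and> (\<forall>g\<in>A. c g \<in> polyS n)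
                          \<and> p = (\<Sum>g\<in>A. c g * g)}"

definition ideal_prod :: "nat \<Rightarrow> 'a::field mpoly set \<Rightarrow> 'a mpoly set \<Rightarrow> 'a mpoly set" where
  "ideal_prod n I J = gen_ideal n {a * b | a b. a \<in> I \<and> b \<in> J}"

fun ideal_pow :: "nat \<Rightarrow> 'a::field mpoly set \<Rightarrow> nat \<Rightarrow> 'a mpoly set" where
  "ideal_pow n I 0 = polyS n"
| "ideal_pow n I (Suc s) = ideal_prod n (ideal_pow n I s) I"

definition is_ideal :: "nat \<Rightarrow> 'a::field mpoly set \<Rightarrow> bool" where
  "is_ideal n P \<longleftrightarrow> P \<subseteq> polyS n \<and> 0 \<in> P \<and> (\<forall>a\<in>P. \<forall>b\<in>P. a + b \<in> P)
     \<and> (\<forall>a\<in>P. \<forall>r\<in>polyS n. r * a \<in> P)"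

definition prime_ideal :: "nat \<Rightarrow> 'a::field mpoly set \<Rightarrow> bool" where
  "prime_ideal n P \<longleftrightarrow> is_ideal n P \<and> P \<noteq> polyS n
     \<and> (\<forall>a\<in>polyS n. \<forall>b\<in>polyS n. a * b \<in> P \<longrightarrow> a \<in> P \<or> b \<in> P)"

text \<open>Associated primes of the S-module S/I: primes of the form (I : f), f \<in> S.\<close>
definition Ass :: "nat \<Rightarrow> 'a::field mpoly set \<Rightarrow> 'a mpoly set set" where
  "Ass n I = {P. prime_ideal n P \<and> (\<exists>f\<in>polyS n. P = {g \<in> polyS n. g * f \<in> I})}"

definition path_mon :: "nat \<Rightarrow> nat \<Rightarrow> 'a::field mpoly" where
  "path_mon t i = (\<Prod>j\<in>{i..i+t-1}. var j)"

definition path_ideal :: "nat \<Rightarrow> nat \<Rightarrow> 'a::field mpoly set" where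
  "path_ideal n t = gen_ideal n {path_mon t i | i. 1 \<le> i \<and> i \<le> n - t + 1}"

definition prime_of :: "nat \<Rightarrow> nat set \<Rightarrow> 'a::field mpoly set" where
  "prime_of n F = gen_ideal n (var ` F)"

text \<open>C_{n,t}; with l the increasing enumeration of F, l!j = i_{j+1}.\<close>
definition C_set :: "nat \<Rightarrow> nat \<Rightarrow> nat set set" where
  "C_set n t = {F. F \<subseteq> {1..n} \<and> F \<noteq> {} \<and>
     (let l = sorted_list_of_set F; r = length l in
        1 \<le> l!0 \<and> l!0 \<le> t
      \<and> (2 \<le> r \<longrightarrow> l!1 > t)
      \<and> (\<forall>j. j + 1 < r \<longrightarrow> 1 \<le> l!(j+1) - l!j \<and> l!(j+1) - l!j \<le> t)
      \<and> (\<forall>j. j + 2 < r \<longrightarrow> l!(j+2) - l!j > t)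
      \<and> (2 \<le> r \<longrightarrow> l!(r-2) < n - t + 1)
      \<and> n - t + 1 \<le> l!(r-1) \<and> l!(r-1) \<le> n)}"

end

theory Submission
  imports Defs
begin


definition dv :: "(nat \<Rightarrow>\<^sub>0 nat) \<Rightarrow> (nat \<Rightarrow>\<^sub>0 nat) \<Rightarrow> bool" where
  "dv e m \<longleftrightarrow> (\<forall>i. Poly_Mapping.lookup e i \<le> Poly_Mapping.lookup m i)"

definition MI :: "nat \<Rightarrow> (nat \<Rightarrow>\<^sub>0 nat) set \<Rightarrow> 'a::field mpoly set" where
  "MI n E = {p \<in> polyS n. \<forall>m\<in>Poly_Mapping.keys p. \<exists>e\<in>E. dv e m}"

definition degF :: "nat set \<Rightarrow> (nat \<Rightarrow>\<^sub>0 nat) \<Rightarrow> nat" where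
  "degF F m = (\<Sum>i\<in>F. Poly_Mapping.lookup m i)"

definition QS :: "nat \<Rightarrow> nat set \<Rightarrow> nat \<Rightarrow> 'a::field mpoly set" where
  "QS n F s = {p \<in> polyS n. \<forall>m\<in>Poly_Mapping.keys p. s \<le> degF F m}"

definition valid :: "nat \<Rightarrow> (nat \<Rightarrow>\<^sub>0 nat) set \<Rightarrow> bool" where
  "valid n E \<longleftrightarrow> (\<forall>e\<in>E. Poly_Mapping.keys e \<subseteq> {1..n})"

lemma polyS_zero[simp]: "0 \<in> polyS n"
  by (simp add: polyS_def)

lemma polyS_add: "p \<in> polyS n \<Longrightarrow> q \<in> polyS n \<Longrightarrow> p + q \<in> polyS n"
  unfolding polyS_def using keys_add[of p q] by blast

lemma keys_add_mon: "Poly_Mapping.keys (a + b :: nat \<Rightarrow>\<^sub>0 nat) = Poly_Mapping.keys a \<union> Poly_Mapping.keys b"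
  by (rule set_eqI) (simp add: in_keys_iff lookup_add)

lemma polyS_mult: "p \<in> polyS n \<Longrightarrow> q \<in> polyS n \<Longrightarrow> p * q \<in> polyS n"
  unfolding polyS_def
proof safe
  fix m x
  assume p: "\<forall>m\<in>Poly_Mapping.keys p. Poly_Mapping.keys m \<subseteq> {1..n}" and q: "\<forall>m\<in>Poly_Mapping.keys q. Poly_Mapping.keys m \<subseteq> {1..n}"
    and m: "m \<in> Poly_Mapping.keys (p * q)" and x: "x \<in> Poly_Mapping.keys m"
  from m keys_mult obtain a b where "m = a + b" "a \<in> Poly_Mapping.keys p" "b \<in> Poly_Mapping.keys q" by blast
  then have "x \<in> Poly_Mapping.keys a \<union> Poly_Mapping.keys b" using x by (simp add: keys_add_mon)
  with p q \<open>a \<in> Poly_Mapping.keys p\<close> \<open>b \<in> Poly_Mapping.keys q\<close> show "x \<in> {1..n}" by blast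
qed

lemma polyS_single: "Poly_Mapping.keys m \<subseteq> {1..n} \<Longrightarrow> Poly_Mapping.single m c \<in> polyS n"
  by (simp add: polyS_def)

lemma polyS_one[simp]: "1 \<in> polyS n"
  by (simp add: polyS_def)

lemma polyS_sum: "finite A \<Longrightarrow> (\<And>x. x \<in> A \<Longrightarrow> f x \<in> polyS n) \<Longrightarrow> sum f A \<in> polyS n"
  by (induction A rule: finite_induct) (auto intro: polyS_add)

lemma polyS_prod: "finite A \<Longrightarrow> (\<And>x. x \<in> A \<Longrightarrow> f x \<in> polyS n) \<Longrightarrow> prod f A \<in> polyS n"
  by (induction A rule: finite_induct) (auto intro: polyS_mult)

lemma ideal_sum: assumes "is_ideal n J" "finite A" "\<And>x. x \<in> A \<Longrightarrow> f x \<in> J" shows "sum f A \<in> J"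
  using assms(2,3) by (induction A rule: finite_induct) (use assms(1) in \<open>auto simp: is_ideal_def\<close>)

lemma ideal_multL: "is_ideal n J \<Longrightarrow> a \<in> J \<Longrightarrow> r \<in> polyS n \<Longrightarrow> r * a \<in> J"
  by (auto simp: is_ideal_def)

lemma ideal_multR: "is_ideal n J \<Longrightarrow> a \<in> J \<Longrightarrow> r \<in> polyS n \<Longrightarrow> a * r \<in> J"
  by (auto simp: is_ideal_def mult.commute)

lemma gen_sub: "is_ideal n J \<Longrightarrow> X \<subseteq> J \<Longrightarrow> gen_ideal n X \<subseteq> J"
  unfolding gen_ideal_def
proof safe
  fix A and c :: "'a mpoly \<Rightarrow> 'a mpoly"
  assume J: "is_ideal n J" "X \<subseteq> J" "finite A" "A \<subseteq> X" "\<forall>g\<in>A. c g \<in> polyS n"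
  show "(\<Sum>g\<in>A. c g * g) \<in> J"
    by (rule ideal_sum[OF J(1) J(3)]) (use J in \<open>auto intro: ideal_multL\<close>)
qed

lemma gen_mono: "X \<subseteq> Y \<Longrightarrow> gen_ideal n X \<subseteq> gen_ideal n Y"
  unfolding gen_ideal_def by blast

lemma dv_refl[simp]: "dv e e" by (simp add: dv_def)
lemma dv_zero[simp]: "dv 0 m" by (simp add: dv_def)
lemma dv_addR: "dv e m \<Longrightarrow> dv e (a + m)" by (auto simp: dv_def lookup_add intro: trans_le_add2)
lemma dv_add: "dv e m \<Longrightarrow> dv e' m' \<Longrightarrow> dv (e + e') (m + m')"
  by (auto simp: dv_def lookup_add intro: add_mono)

lemma MI_ideal: "is_ideal n (MI n E)"
  unfolding is_ideal_def MI_def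
proof (intro conjI ballI)
  show "{p \<in> polyS n. \<forall>m\<in>Poly_Mapping.keys p. \<exists>e\<in>E. dv e m} \<subseteq> polyS n" by blast
  show "(0::'a mpoly) \<in> {p \<in> polyS n. \<forall>m\<in>Poly_Mapping.keys p. \<exists>e\<in>E. dv e m}" by simp
next
  fix a b :: "'a mpoly" assume a: "a \<in> {p \<in> polyS n. \<forall>m\<in>Poly_Mapping.keys p. \<exists>e\<in>E. dv e m}"
    and b: "b \<in> {p \<in> polyS n. \<forall>m\<in>Poly_Mapping.keys p. \<exists>e\<in>E. dv e m}"
  then show "a + b \<in> {p \<in> polyS n. \<forall>m\<in>Poly_Mapping.keys p. \<exists>e\<in>E. dv e m}"
    using keys_add[of a b] by (auto intro: polyS_add)
next
  fix a r :: "'a mpoly" assume a: "a \<in> {p \<in> polyS n. \<forall>m\<in>Poly_Mapping.keys p. \<exists>e\<in>E. dv e m}"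
    and r: "r \<in> polyS n"
  show "r * a \<in> {p \<in> polyS n. \<forall>m\<in>Poly_Mapping.keys p. \<exists>e\<in>E. dv e m}"
  proof safe
    show "r * a \<in> polyS n" using a r by (auto intro: polyS_mult)
  next
    fix m assume "m \<in> Poly_Mapping.keys (r * a)"
    then obtain x y where "m = x + y" "y \<in> Poly_Mapping.keys a" using keys_mult by blast
    then show "\<exists>e\<in>E. dv e m" using a dv_addR by blast
  qed
qed

lemma degF_add: "degF F (a + b) = degF F a + degF F b"
  by (simp add: degF_def lookup_add sum.distrib)

lemma QS_ideal: "is_ideal n (QS n F s)"
  unfolding is_ideal_def QS_def
proof (intro conjI ballI)
  show "{p \<in> polyS n. \<forall>m\<in>Poly_Mapping.keys p. s \<le> degF F m} \<subseteq> polyS n" by blast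
  show "(0::'a mpoly) \<in> {p \<in> polyS n. \<forall>m\<in>Poly_Mapping.keys p. s \<le> degF F m}" by simp
next
  fix a b :: "'a mpoly" assume a: "a \<in> {p \<in> polyS n. \<forall>m\<in>Poly_Mapping.keys p. s \<le> degF F m}"
    and b: "b \<in> {p \<in> polyS n. \<forall>m\<in>Poly_Mapping.keys p. s \<le> degF F m}"
  then show "a + b \<in> {p \<in> polyS n. \<forall>m\<in>Poly_Mapping.keys p. s \<le> degF F m}"
    using keys_add[of a b] by (auto intro: polyS_add)
next
  fix a r :: "'a mpoly" assume a: "a \<in> {p \<in> polyS n. \<forall>m\<in>Poly_Mapping.keys p. s \<le> degF F m}"
    and r: "r \<in> polyS n"
  show "r * a \<in> {p \<in> polyS n. \<forall>m\<in>Poly_Mapping.keys p. s \<le> degF F m}"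
  proof safe
    show "r * a \<in> polyS n" using a r by (auto intro: polyS_mult)
  next
    fix m assume "m \<in> Poly_Mapping.keys (r * a)"
    then obtain x y where "m = x + y" "y \<in> Poly_Mapping.keys a" using keys_mult by blast
    then show "s \<le> degF F m" using a by (auto simp: degF_add)
  qed
qed

lemma poly_sum_single: "p = (\<Sum>m\<in>Poly_Mapping.keys p. Poly_Mapping.single m (Poly_Mapping.lookup p m))"
proof (rule poly_mapping_eqI)
  fix k
  have "Poly_Mapping.lookup (\<Sum>m\<in>Poly_Mapping.keys p. Poly_Mapping.single m (Poly_Mapping.lookup p m)) k = (\<Sum>m\<in>Poly_Mapping.keys p. Poly_Mapping.lookup (Poly_Mapping.single m (Poly_Mapping.lookup p m)) k)"
    by (simp add: lookup_sum)
  also have "\<dots> = (\<Sum>m\<in>Poly_Mapping.keys p. if m = k then Poly_Mapping.lookup p m else 0)"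
    by (intro sum.cong) (auto simp: lookup_single)
  also have "\<dots> = Poly_Mapping.lookup p k"
    by (auto simp: in_keys_iff)
  finally show "Poly_Mapping.lookup p k = Poly_Mapping.lookup (\<Sum>m\<in>Poly_Mapping.keys p. Poly_Mapping.single m (Poly_Mapping.lookup p m)) k" by simp
qed

lemma MI_eq_gen:
  assumes "valid n E"
  shows "MI n E = (gen_ideal n ((\<lambda>e. Poly_Mapping.single e 1) ` E) :: 'a::field mpoly set)"
proof
  have "(Poly_Mapping.single e 1 :: 'a mpoly) \<in> MI n E" if "e \<in> E" for e
  proof -
    have "(Poly_Mapping.single e 1 :: 'a mpoly) \<in> polyS n" using that assms by (simp add: valid_def polyS_single)
    then show ?thesis using that dv_refl by (force simp: MI_def)
  qed
  then have "(\<lambda>e. Poly_Mapping.single e 1) ` E \<subseteq> (MI n E :: 'a mpoly set)" by blast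
  then show "gen_ideal n ((\<lambda>e. Poly_Mapping.single e 1) ` E) \<subseteq> (MI n E :: 'a mpoly set)"
    by (rule gen_sub[OF MI_ideal])
next
  show "MI n E \<subseteq> (gen_ideal n ((\<lambda>e. Poly_Mapping.single e 1) ` E) :: 'a mpoly set)"
  proof
    fix p :: "'a mpoly" assume p: "p \<in> MI n E"
    then have pS: "p \<in> polyS n" and pm: "\<forall>m\<in>Poly_Mapping.keys p. \<exists>e\<in>E. dv e m" by (auto simp: MI_def)
    define sel where "sel m = (SOME e. e \<in> E \<and> dv e m)" for m
    have sel: "sel m \<in> E \<and> dv (sel m) m" if "m \<in> Poly_Mapping.keys p" for m
    proof -
      have "\<exists>e. e \<in> E \<and> dv e m" using pm that by blast
      from someI_ex[OF this] show ?thesis unfolding sel_def .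
    qed
    define mo where "mo m = (Poly_Mapping.single (sel m) 1 :: 'a mpoly)" for m
    define A where "A = mo ` Poly_Mapping.keys p"
    define c where "c q = (\<Sum>m\<in>{m\<in>Poly_Mapping.keys p. mo m = q}. Poly_Mapping.single (m - sel m) (Poly_Mapping.lookup p m))" for q
    have "(\<Sum>g\<in>A. c g * g) = (\<Sum>g\<in>A. \<Sum>m\<in>{m\<in>Poly_Mapping.keys p. mo m = g}. Poly_Mapping.single (m - sel m) (Poly_Mapping.lookup p m) * mo m)"
      unfolding c_def by (simp add: sum_distrib_right)
    also have "\<dots> = (\<Sum>m\<in>Poly_Mapping.keys p. Poly_Mapping.single (m - sel m) (Poly_Mapping.lookup p m) * mo m)"
      unfolding A_def by (rule sum.image_gen[symmetric]) simp
    also have "\<dots> = (\<Sum>m\<in>Poly_Mapping.keys p. Poly_Mapping.single m (Poly_Mapping.lookup p m))"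
    proof (rule sum.cong[OF refl])
      fix m assume m: "m \<in> Poly_Mapping.keys p"
      have "m - sel m + sel m = m"
        using conjunct2[OF sel[OF m]] by (intro poly_mapping_eqI) (auto simp: lookup_add lookup_minus dv_def)
      then show "Poly_Mapping.single (m - sel m) (Poly_Mapping.lookup p m) * mo m = Poly_Mapping.single m (Poly_Mapping.lookup p m)"
        by (simp add: mo_def mult_single)
    qed
    also have "\<dots> = p" by (rule poly_sum_single[symmetric])
    finally have eq: "p = (\<Sum>g\<in>A. c g * g)" by simp
    have cS: "c g \<in> polyS n" for g
      unfolding c_def
    proof (rule polyS_sum)
      fix m assume "m \<in> {m \<in> Poly_Mapping.keys p. mo m = g}"
      then have "Poly_Mapping.keys m \<subseteq> {1..n}" using pS by (auto simp: polyS_def)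
      moreover have "Poly_Mapping.keys (m - sel m) \<subseteq> Poly_Mapping.keys m"
        by (auto simp: in_keys_iff lookup_minus)
      ultimately show "Poly_Mapping.single (m - sel m) (Poly_Mapping.lookup p m) \<in> polyS n"
        by (intro polyS_single) blast
    qed simp
    have Asub: "A \<subseteq> (\<lambda>e. Poly_Mapping.single e 1) ` E" unfolding A_def
    proof (rule image_subsetI)
      fix m assume "m \<in> Poly_Mapping.keys p"
      then show "mo m \<in> (\<lambda>e. Poly_Mapping.single e 1) ` E" unfolding mo_def using conjunct1[OF sel] by (rule_tac imageI)
    qed
    have finA: "finite A" unfolding A_def by simp
    show "p \<in> gen_ideal n ((\<lambda>e. Poly_Mapping.single e 1) ` E)"
      unfolding gen_ideal_def mem_Collect_eq
      by (rule exI[of _ A], rule exI[of _ c]) (use eq cS Asub finA in blast)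
  qed
qed

lemma mon_in_MI: "valid n A \<Longrightarrow> a \<in> A \<Longrightarrow> (Poly_Mapping.single a 1 :: 'a::field mpoly) \<in> MI n A"
proof -
  assume v: "valid n A" and a: "a \<in> A"
  have "(Poly_Mapping.single a 1 :: 'a mpoly) \<in> polyS n" using v a by (simp add: valid_def polyS_single)
  then show ?thesis using a dv_refl by (force simp: MI_def)
qed

definition psum :: "(nat \<Rightarrow>\<^sub>0 nat) set \<Rightarrow> (nat \<Rightarrow>\<^sub>0 nat) set \<Rightarrow> (nat \<Rightarrow>\<^sub>0 nat) set" where
  "psum A B = {a + b | a b. a \<in> A \<and> b \<in> B}"

fun Epow :: "(nat \<Rightarrow>\<^sub>0 nat) set \<Rightarrow> nat \<Rightarrow> (nat \<Rightarrow>\<^sub>0 nat) set" where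
  "Epow E 0 = {0}"
| "Epow E (Suc s) = psum (Epow E s) E"

lemma valid_psum: "valid n A \<Longrightarrow> valid n B \<Longrightarrow> valid n (psum A B)"
  unfolding valid_def psum_def
proof (intro ballI impI)
  fix e assume A: "\<forall>e\<in>A. Poly_Mapping.keys e \<subseteq> {1..n}" and B: "\<forall>e\<in>B. Poly_Mapping.keys e \<subseteq> {1..n}"
    and "e \<in> {a + b |a b. a \<in> A \<and> b \<in> B}"
  then obtain a b where ab: "e = a + b" "a \<in> A" "b \<in> B" by blast
  then have "Poly_Mapping.keys a \<subseteq> {1..n}" "Poly_Mapping.keys b \<subseteq> {1..n}" using A B by auto
  then show "Poly_Mapping.keys e \<subseteq> {1..n}" by (simp add: keys_add_mon ab(1))
qed

lemma valid_Epow: assumes "valid n E" shows "valid n (Epow E s)"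
proof (induction s)
  case 0 show ?case by (simp add: valid_def)
next
  case (Suc s) then show ?case using valid_psum assms by simp
qed

lemma prod_MI:
  assumes vA: "valid n A" and vB: "valid n B"
  shows "ideal_prod n (MI n A) (MI n B) = (MI n (psum A B) :: 'a::field mpoly set)"
proof
  show "ideal_prod n (MI n A) (MI n B) \<subseteq> (MI n (psum A B) :: 'a mpoly set)"
    unfolding ideal_prod_def
  proof (rule gen_sub[OF MI_ideal], safe)
    fix a b :: "'a mpoly" assume a: "a \<in> MI n A" and b: "b \<in> MI n B"
    show "a * b \<in> MI n (psum A B)"
      unfolding MI_def
    proof safe
      show "a * b \<in> polyS n" using a b by (auto simp: MI_def intro: polyS_mult)
    next
      fix m assume "m \<in> Poly_Mapping.keys (a * b)"
      then obtain x y where xy: "m = x + y" "x \<in> Poly_Mapping.keys a" "y \<in> Poly_Mapping.keys b"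
        using keys_mult by blast
      obtain \<alpha> where "\<alpha> \<in> A" "dv \<alpha> x" using a xy by (auto simp: MI_def)
      moreover obtain \<beta> where "\<beta> \<in> B" "dv \<beta> y" using b xy by (auto simp: MI_def)
      ultimately show "\<exists>e\<in>psum A B. dv e m"
        unfolding psum_def using xy dv_add by blast
    qed
  qed
next
  have "MI n (psum A B) = (gen_ideal n ((\<lambda>e. Poly_Mapping.single e 1) ` psum A B) :: 'a mpoly set)"
    by (rule MI_eq_gen[OF valid_psum[OF vA vB]])
  also have "\<dots> \<subseteq> ideal_prod n (MI n A) (MI n B)"
    unfolding ideal_prod_def
  proof (rule gen_mono, safe)
    fix e assume "e \<in> psum A B"
    then obtain a b where ab: "e = a + b" "a \<in> A" "b \<in> B" by (auto simp: psum_def)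
    have "(Poly_Mapping.single e 1 :: 'a mpoly) = Poly_Mapping.single a 1 * Poly_Mapping.single b 1"
      by (simp add: ab mult_single)
    then show "\<exists>x y. (Poly_Mapping.single e 1 :: 'a mpoly) = x * y \<and> x \<in> MI n A \<and> y \<in> MI n B"
      using mon_in_MI[OF vA ab(2)] mon_in_MI[OF vB ab(3)] by blast
  qed
  finally show "MI n (psum A B) \<subseteq> (ideal_prod n (MI n A) (MI n B) :: 'a mpoly set)" .
qed

lemma pow_MI:
  assumes "valid n E"
  shows "ideal_pow n (MI n E) s = (MI n (Epow E s) :: 'a::field mpoly set)"
proof (induction s)
  case 0
  show ?case by (auto simp: MI_def)
next
  case (Suc s)
  then show ?case using prod_MI[OF valid_Epow[OF assms] assms] by simp
qed

definition pv :: "nat \<Rightarrow> nat \<Rightarrow> (nat \<Rightarrow>\<^sub>0 nat)" where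
  "pv t i = (\<Sum>j\<in>{i..i+t-1}. Poly_Mapping.single j 1)"

lemma lookup_pv: "Poly_Mapping.lookup (pv t i) j = (if i \<le> j \<and> j \<le> i + t - 1 then 1 else 0)"
proof -
  have "Poly_Mapping.lookup (pv t i) j = (\<Sum>k\<in>{i..i+t-1}. if k = j then 1 else 0)"
    unfolding pv_def lookup_sum by (intro sum.cong) (auto simp: lookup_single)
  then show ?thesis by auto
qed

lemma prod_var: "finite A \<Longrightarrow> (\<Prod>j\<in>A. var j) = (Poly_Mapping.single (\<Sum>j\<in>A. Poly_Mapping.single j 1) 1 :: 'a::field mpoly)"
  by (induction A rule: finite_induct) (auto simp: var_def mult_single)

lemma path_mon_eq: "path_mon t i = (Poly_Mapping.single (pv t i) 1 :: 'a::field mpoly)"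
  unfolding path_mon_def pv_def by (rule prod_var) simp

definition PE :: "nat \<Rightarrow> nat \<Rightarrow> (nat \<Rightarrow>\<^sub>0 nat) set" where
  "PE n t = {pv t i | i. 1 \<le> i \<and> i \<le> n - t + 1}"

lemma valid_PE: "1 \<le> t \<Longrightarrow> t \<le> n \<Longrightarrow> valid n (PE n t)"
  unfolding valid_def PE_def
proof safe
  fix i x assume "1 \<le> t" "t \<le> n" "1 \<le> i" "i \<le> n - t + 1" "x \<in> Poly_Mapping.keys (pv t i)"
  then show "x \<in> {1..n}" by (auto simp: in_keys_iff lookup_pv split: if_splits)
qed

lemma path_ideal_MI:
  assumes "1 \<le> t" "t \<le> n"
  shows "path_ideal n t = (MI n (PE n t) :: 'a::field mpoly set)"
proof -
  have "{path_mon t i | i. 1 \<le> i \<and> i \<le> n - t + 1} = ((\<lambda>e. Poly_Mapping.single e 1) ` PE n t :: 'a mpoly set)"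
    unfolding PE_def by (auto simp: path_mon_eq)
  then show ?thesis unfolding path_ideal_def using MI_eq_gen[OF valid_PE[OF assms]] by metis
qed

definition UE :: "nat set \<Rightarrow> (nat \<Rightarrow>\<^sub>0 nat) set" where
  "UE F = {Poly_Mapping.single i 1 | i. i \<in> F}"

lemma prime_of_MI:
  assumes "F \<subseteq> {1..n}"
  shows "prime_of n F = (MI n (UE F) :: 'a::field mpoly set)"
proof -
  have v: "valid n (UE F)" using assms by (auto simp: valid_def UE_def)
  have "var ` F = ((\<lambda>e. Poly_Mapping.single e 1) ` UE F :: 'a mpoly set)"
    unfolding UE_def var_def by auto
  then show ?thesis unfolding prime_of_def using MI_eq_gen[OF v] by metis
qed

lemma dv_unit: "dv (Poly_Mapping.single i 1) m \<longleftrightarrow> 1 \<le> Poly_Mapping.lookup m i"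
  unfolding dv_def lookup_single by (auto simp: when_def)

lemma MI_UE_QS:
  assumes "finite F"
  shows "MI n (UE F) = (QS n F 1 :: 'a::field mpoly set)"
proof -
  have "(\<exists>e\<in>UE F. dv e m) \<longleftrightarrow> 1 \<le> degF F m" for m
  proof -
    have "(\<exists>e\<in>UE F. dv e m) \<longleftrightarrow> (\<exists>i\<in>F. Poly_Mapping.lookup m i \<noteq> 0)"
      unfolding UE_def using dv_unit by (auto simp: Suc_le_eq)
    also have "\<dots> \<longleftrightarrow> degF F m \<noteq> 0"
      unfolding degF_def using assms by simp
    finally show ?thesis by linarith
  qed
  then show ?thesis unfolding MI_def QS_def by auto
qed

definition restr :: "((nat \<Rightarrow>\<^sub>0 nat) \<Rightarrow> bool) \<Rightarrow> 'a::field mpoly \<Rightarrow> 'a mpoly" where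
  "restr P p = Poly_Mapping.mapp (\<lambda>m c. if P m then c else 0) p"

lemma lookup_restr: "Poly_Mapping.lookup (restr P p) m = (if P m then Poly_Mapping.lookup p m else 0)"
  unfolding restr_def lookup_mapp by (auto simp: when_def in_keys_iff)

lemma restr_split: "p = restr P p + restr (\<lambda>m. \<not> P m) p"
  by (rule poly_mapping_eqI) (simp add: lookup_add lookup_restr)

lemma keys_restr: "m \<in> Poly_Mapping.keys (restr P p) \<Longrightarrow> m \<in> Poly_Mapping.keys p \<and> P m"
  by (auto simp: in_keys_iff lookup_restr split: if_splits)

lemma lowdeg:
  fixes g h :: "'a::field mpoly"
  assumes g: "g \<noteq> 0" and h: "h \<noteq> 0"
  shows "\<exists>k\<in>Poly_Mapping.keys (g * h). degF F k = Min (degF F ` Poly_Mapping.keys g) + Min (degF F ` Poly_Mapping.keys h)"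
proof -
  define dg where "dg = Min (degF F ` Poly_Mapping.keys g)"
  define dh where "dh = Min (degF F ` Poly_Mapping.keys h)"
  have kg: "Poly_Mapping.keys g \<noteq> {}" using g by simp
  have kh: "Poly_Mapping.keys h \<noteq> {}" using h by simp
  have dgle: "dg \<le> degF F m" if "m \<in> Poly_Mapping.keys g" for m
    unfolding dg_def using that by simp
  have dhle: "dh \<le> degF F m" if "m \<in> Poly_Mapping.keys h" for m
    unfolding dh_def using that by simp
  have "dg \<in> degF F ` Poly_Mapping.keys g" unfolding dg_def by (rule Min_in) (use kg in auto)
  then obtain mg where mg: "mg \<in> Poly_Mapping.keys g" "degF F mg = dg" by auto
  have "dh \<in> degF F ` Poly_Mapping.keys h" unfolding dh_def by (rule Min_in) (use kh in auto)
  then obtain mh where mh: "mh \<in> Poly_Mapping.keys h" "degF F mh = dh" by auto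
  define g1 where "g1 = restr (\<lambda>m. degF F m = dg) g"
  define g2 where "g2 = restr (\<lambda>m. \<not> degF F m = dg) g"
  define h1 where "h1 = restr (\<lambda>m. degF F m = dh) h"
  define h2 where "h2 = restr (\<lambda>m. \<not> degF F m = dh) h"
  have gs: "g = g1 + g2" unfolding g1_def g2_def by (rule restr_split)
  have hs: "h = h1 + h2" unfolding h1_def h2_def by (rule restr_split)
  have g1: "g1 \<noteq> 0"
  proof
    assume "g1 = 0"
    then have "Poly_Mapping.lookup g1 mg = 0" by simp
    then show False using mg by (simp add: g1_def lookup_restr in_keys_iff)
  qed
  have h1: "h1 \<noteq> 0"
  proof
    assume "h1 = 0"
    then have "Poly_Mapping.lookup h1 mh = 0" by simp
    then show False using mh by (simp add: h1_def lookup_restr in_keys_iff)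
  qed
  have kg1: "degF F m = dg" if "m \<in> Poly_Mapping.keys g1" for m
    using keys_restr[OF that[unfolded g1_def]] by simp
  have kh1: "degF F m = dh" if "m \<in> Poly_Mapping.keys h1" for m
    using keys_restr[OF that[unfolded h1_def]] by simp
  have kg2: "degF F m > dg" if "m \<in> Poly_Mapping.keys g2" for m
    using keys_restr[OF that[unfolded g2_def]] dgle by force
  have kh2: "degF F m > dh" if "m \<in> Poly_Mapping.keys h2" for m
    using keys_restr[OF that[unfolded h2_def]] dhle by force
  have kg1': "degF F m \<ge> dg" if "m \<in> Poly_Mapping.keys g1" for m using kg1[OF that] by simp
  have kh1': "degF F m \<ge> dh" if "m \<in> Poly_Mapping.keys h1" for m using kh1[OF that] by simp
  define X where "X = g1 * h2 + g2 * h1 + g2 * h2"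
  have prod: "g * h = g1 * h1 + X" unfolding X_def gs hs by (simp add: algebra_simps)
  have kX: "degF F m > dg + dh" if "m \<in> Poly_Mapping.keys X" for m
  proof -
    have "m \<in> Poly_Mapping.keys (g1 * h2) \<or> m \<in> Poly_Mapping.keys (g2 * h1) \<or> m \<in> Poly_Mapping.keys (g2 * h2)"
      using that keys_add[of "g1 * h2 + g2 * h1" "g2 * h2"] keys_add[of "g1 * h2" "g2 * h1"] unfolding X_def by blast
    then show ?thesis
    proof (elim disjE)
      assume "m \<in> Poly_Mapping.keys (g1 * h2)"
      then obtain a b where ab: "m = a + b" "a \<in> Poly_Mapping.keys g1" "b \<in> Poly_Mapping.keys h2"
        using keys_mult[of g1 h2] by blast
      have "degF F a \<ge> dg" "degF F b \<ge> dh" "degF F a > dg \<or> degF F b > dh"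
        using kg1'[OF ab(2)] kh2[OF ab(3)] by auto
      then show ?thesis unfolding ab(1) degF_add by linarith
    next
      assume "m \<in> Poly_Mapping.keys (g2 * h1)"
      then obtain a b where ab: "m = a + b" "a \<in> Poly_Mapping.keys g2" "b \<in> Poly_Mapping.keys h1"
        using keys_mult[of g2 h1] by blast
      have "degF F a \<ge> dg" "degF F b \<ge> dh" "degF F a > dg \<or> degF F b > dh"
        using kg2[OF ab(2)] kh1'[OF ab(3)] by auto
      then show ?thesis unfolding ab(1) degF_add by linarith
    next
      assume "m \<in> Poly_Mapping.keys (g2 * h2)"
      then obtain a b where ab: "m = a + b" "a \<in> Poly_Mapping.keys g2" "b \<in> Poly_Mapping.keys h2"
        using keys_mult[of g2 h2] by blast
      have "degF F a \<ge> dg" "degF F b \<ge> dh" "degF F a > dg \<or> degF F b > dh"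
        using kg2[OF ab(2)] kh2[OF ab(3)] by auto
      then show ?thesis unfolding ab(1) degF_add by linarith
    qed
  qed
  have "g1 * h1 \<noteq> 0" using g1 h1 by simp
  then obtain k where k: "k \<in> Poly_Mapping.keys (g1 * h1)" by (meson keys_eq_empty ex_in_conv)
  then obtain a b where ab: "k = a + b" "a \<in> Poly_Mapping.keys g1" "b \<in> Poly_Mapping.keys h1"
    using keys_mult[of g1 h1] by blast
  have dk: "degF F k = dg + dh" using ab kg1 kh1 by (simp add: degF_add)
  then have "k \<notin> Poly_Mapping.keys X" using kX[of k] by auto
  then have "Poly_Mapping.lookup X k = 0" by (simp add: in_keys_iff)
  then have "Poly_Mapping.lookup (g * h) k = Poly_Mapping.lookup (g1 * h1) k"
    by (simp add: prod lookup_add)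
  then have "k \<in> Poly_Mapping.keys (g * h)" using k by (simp add: in_keys_iff)
  then show ?thesis using dk dg_def dh_def by blast
qed

lemma QS_primary:
  fixes g h :: "'a::field mpoly"
  assumes "g \<in> polyS n" "h \<in> polyS n" "g * h \<in> QS n F s" "g \<notin> QS n F 1"
  shows "h \<in> QS n F s"
proof (rule ccontr)
  assume hn: "h \<notin> QS n F s"
  obtain mg where mg: "mg \<in> Poly_Mapping.keys g" "degF F mg = 0"
    using assms(1,4) unfolding QS_def by force
  obtain mh where mh: "mh \<in> Poly_Mapping.keys h" "degF F mh < s"
    using assms(2) hn unfolding QS_def by force
  have g0: "g \<noteq> 0" using mg by auto
  have h0: "h \<noteq> 0" using mh by auto
  have "Min (degF F ` Poly_Mapping.keys g) = 0" using mg by (metis Min_le finite_imageI finite_keys image_eqI le_zero_eq)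
  moreover have "Min (degF F ` Poly_Mapping.keys h) < s"
    using mh by (meson Min_le finite_imageI finite_keys image_eqI le_less_trans)
  ultimately obtain k where "k \<in> Poly_Mapping.keys (g * h)" "degF F k < s"
    using lowdeg[OF g0 h0, of F] by auto
  then show False using assms(3) unfolding QS_def by auto
qed

lemma QS_prime:
  "prime_ideal n (QS n F 1 :: 'a::field mpoly set)"
  unfolding prime_ideal_def
proof (intro conjI ballI impI)
  show "is_ideal n (QS n F 1 :: 'a mpoly set)" by (rule QS_ideal)
  have "(1::'a mpoly) \<notin> QS n F 1" by (simp add: QS_def degF_def)
  then show "QS n F 1 \<noteq> (polyS n :: 'a mpoly set)" by auto
next
  fix a b :: "'a mpoly" assume "a \<in> polyS n" "b \<in> polyS n" "a * b \<in> QS n F 1"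
  then show "a \<in> QS n F 1 \<or> b \<in> QS n F 1" using QS_primary by blast
qed



definition cover :: "nat \<Rightarrow> nat \<Rightarrow> nat set \<Rightarrow> bool" where
  "cover n t F \<longleftrightarrow> (\<forall>w. 1 \<le> w \<and> w \<le> n - t + 1 \<longrightarrow> (\<exists>x\<in>F. w \<le> x \<and> x \<le> w + t - 1))"

definition nonred :: "nat \<Rightarrow> nat \<Rightarrow> nat set \<Rightarrow> nat \<Rightarrow> bool" where
  "nonred n t F x \<longleftrightarrow> (\<exists>w. 1 \<le> w \<and> w \<le> n - t + 1 \<and> w \<le> x \<and> x \<le> w + t - 1 \<and>
      (\<forall>y\<in>F. w \<le> y \<and> y \<le> w + t - 1 \<longrightarrow> y = x))"

definition mincover :: "nat \<Rightarrow> nat \<Rightarrow> nat set \<Rightarrow> bool" where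
  "mincover n t F \<longleftrightarrow> F \<subseteq> {1..n} \<and> cover n t F \<and> (\<forall>x\<in>F. nonred n t F x)"

lemma exists_mincover:
  assumes "finite F" "cover n t F"
  shows "\<exists>G\<subseteq>F. cover n t G \<and> (\<forall>x\<in>G. nonred n t G x)"
  using assms
proof (induction "card F" arbitrary: F rule: less_induct)
  case less
  show ?case
  proof (cases "\<forall>x\<in>F. nonred n t F x")
    case True
    then show ?thesis using less.prems by blast
  next
    case False
    then obtain x where x: "x \<in> F" "\<not> nonred n t F x" by blast
    have "cover n t (F - {x})"
      unfolding cover_def
    proof (intro allI impI)
      fix w assume w: "1 \<le> w \<and> w \<le> n - t + 1"
      then obtain y where y: "y \<in> F" "w \<le> y \<and> y \<le> w + t - 1"
        using less.prems(2) unfolding cover_def by blast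
      show "\<exists>x'\<in>F - {x}. w \<le> x' \<and> x' \<le> w + t - 1"
      proof (cases "y = x")
        case False then show ?thesis using y by blast
      next
        case True
        then show ?thesis using x w y unfolding nonred_def by blast
      qed
    qed
    moreover have "card (F - {x}) < card F" using card_Diff1_less[OF less.prems(1) x(1)] .
    ultimately obtain G where "G \<subseteq> F - {x}" "cover n t G" "\<forall>x\<in>G. nonred n t G x"
      using less.hyps[of "F - {x}"] less.prems(1) by blast
    then show ?thesis by blast
  qed
qed

lemma sl_facts:
  assumes "finite F"
  defines "l \<equiv> sorted_list_of_set F"
  shows "set l = F" "length l = card F" "\<And>i j. i < j \<Longrightarrow> j < length l \<Longrightarrow> l!i < l!j"
  using assms strict_sorted_list_of_set[of F]
  by (auto intro: sorted_wrt_nth_less)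

lemma sl_mono_iff:
  assumes "finite F" "i < card F" "j < card F"
  shows "sorted_list_of_set F ! i < sorted_list_of_set F ! j \<longleftrightarrow> i < j"
  using sl_facts[OF assms(1)] assms(2,3)
  by (metis linorder_neqE_nat not_less_iff_gr_or_eq)

lemma sl_mono_le_iff:
  assumes "finite F" "i < card F" "j < card F"
  shows "sorted_list_of_set F ! i \<le> sorted_list_of_set F ! j \<longleftrightarrow> i \<le> j"
  using sl_mono_iff[OF assms(1) assms(3) assms(2)] by (metis not_less)

lemma sl_mem:
  assumes "finite F" "y \<in> F"
  shows "\<exists>j<card F. y = sorted_list_of_set F ! j"
  using sl_facts(1,2)[OF assms(1)] assms(2) by (metis in_set_conv_nth)

lemma sl_in:
  assumes "finite F" "j < card F"
  shows "sorted_list_of_set F ! j \<in> F"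
  using sl_facts(1,2)[OF assms(1)] assms(2) by (metis nth_mem)

lemma C_setD:
  assumes "F \<in> C_set n t" "l = sorted_list_of_set F" "r = length l"
  shows "F \<subseteq> {1..n}" "F \<noteq> {}" "1 \<le> l!0 \<and> l!0 \<le> t
      \<and> (2 \<le> r \<longrightarrow> l!1 > t)
      \<and> (\<forall>j. j + 1 < r \<longrightarrow> 1 \<le> l!(j+1) - l!j \<and> l!(j+1) - l!j \<le> t)
      \<and> (\<forall>j. j + 2 < r \<longrightarrow> l!(j+2) - l!j > t)
      \<and> (2 \<le> r \<longrightarrow> l!(r-2) < n - t + 1)
      \<and> n - t + 1 \<le> l!(r-1) \<and> l!(r-1) \<le> n"
  using assms unfolding C_set_def Let_def by simp_all

lemma C_setI:
  assumes "F \<subseteq> {1..n}" "F \<noteq> {}" "l = sorted_list_of_set F" "r = length l"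
    "1 \<le> l!0 \<and> l!0 \<le> t
      \<and> (2 \<le> r \<longrightarrow> l!1 > t)
      \<and> (\<forall>j. j + 1 < r \<longrightarrow> 1 \<le> l!(j+1) - l!j \<and> l!(j+1) - l!j \<le> t)
      \<and> (\<forall>j. j + 2 < r \<longrightarrow> l!(j+2) - l!j > t)
      \<and> (2 \<le> r \<longrightarrow> l!(r-2) < n - t + 1)
      \<and> n - t + 1 \<le> l!(r-1) \<and> l!(r-1) \<le> n"
  shows "F \<in> C_set n t"
  using assms unfolding C_set_def Let_def by simp

lemma C_to_min:
  assumes t: "2 \<le> t" "t \<le> n" and F: "F \<in> C_set n t"
  shows "mincover n t F"
proof -
  define l where "l = sorted_list_of_set F"
  define r where "r = card F"
  have Fn: "F \<subseteq> {1..n}" and Fne: "F \<noteq> {}" using C_setD[OF F refl refl] by blast+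
  have fin: "finite F" using Fn finite_subset by blast
  have len: "length l = r" unfolding l_def r_def using sl_facts(2)[OF fin] .
  have r1: "1 \<le> r" using fin Fne by (simp add: r_def Suc_le_eq card_gt_0_iff)
  have CC: "1 \<le> l!0 \<and> l!0 \<le> t
      \<and> (2 \<le> r \<longrightarrow> l!1 > t)
      \<and> (\<forall>j. j + 1 < r \<longrightarrow> 1 \<le> l!(j+1) - l!j \<and> l!(j+1) - l!j \<le> t)
      \<and> (\<forall>j. j + 2 < r \<longrightarrow> l!(j+2) - l!j > t)
      \<and> (2 \<le> r \<longrightarrow> l!(r-2) < n - t + 1)
      \<and> n - t + 1 \<le> l!(r-1) \<and> l!(r-1) \<le> n"
    using C_setD(3)[OF F l_def len[symmetric]] .
  have c1: "1 \<le> l!0" "l!0 \<le> t"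
    and c2: "2 \<le> r \<Longrightarrow> l!1 > t"
    and c3: "\<And>j. j + 1 < r \<Longrightarrow> l!(j+1) - l!j \<le> t"
    and c4: "\<And>j. j + 2 < r \<Longrightarrow> l!(j+2) - l!j > t"
    and c5: "2 \<le> r \<Longrightarrow> l!(r-2) < n - t + 1"
    and c6: "n - t + 1 \<le> l!(r-1)" "l!(r-1) \<le> n"
    using CC by blast+
  have lt: "\<And>i j. i < r \<Longrightarrow> j < r \<Longrightarrow> l!i < l!j \<longleftrightarrow> i < j"
    unfolding l_def r_def using sl_mono_iff[OF fin] by blast
  have le: "\<And>i j. i < r \<Longrightarrow> j < r \<Longrightarrow> l!i \<le> l!j \<longleftrightarrow> i \<le> j"
    unfolding l_def r_def using sl_mono_le_iff[OF fin] by blast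
  have mem: "\<And>y. y \<in> F \<Longrightarrow> \<exists>j<r. y = l!j" unfolding l_def r_def using sl_mem[OF fin] by blast
  have inF: "\<And>j. j < r \<Longrightarrow> l!j \<in> F" unfolding l_def r_def using sl_in[OF fin] by blast
  have cov: "cover n t F"
    unfolding cover_def
  proof (intro allI impI)
    fix w assume w: "1 \<le> w \<and> w \<le> n - t + 1"
    have ex: "\<exists>k. k < r \<and> w \<le> l!k" using c6 w r1 by (intro exI[of _ "r-1"]) auto
    define k where "k = (LEAST k. k < r \<and> w \<le> l!k)"
    have k: "k < r" "w \<le> l!k" using LeastI_ex[OF ex] unfolding k_def by auto
    show "\<exists>x\<in>F. w \<le> x \<and> x \<le> w + t - 1"
    proof (cases k)
      case 0
      then show ?thesis using k c1 w inF by (intro bexI[of _ "l!k"]) auto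
    next
      case (Suc k')
      have "\<not> (k' < r \<and> w \<le> l!k')" using not_less_Least[of k' "\<lambda>k. k < r \<and> w \<le> l!k"] Suc k_def by auto
      then have "l!k' < w" using Suc k by auto
      moreover have "l!k - l!k' \<le> t" using c3[of k'] Suc k by auto
      ultimately show ?thesis using k inF by (intro bexI[of _ "l!k"]) auto
    qed
  qed
  have nr: "nonred n t F x" if x: "x \<in> F" for x
  proof -
    obtain k where k: "k < r" "x = l!k" using mem x by blast
    show ?thesis
    proof (cases "k = 0")
      case True
      show ?thesis unfolding nonred_def
      proof (intro exI[of _ 1] conjI ballI impI)
        show "1 \<le> x" "x \<le> 1 + t - 1" using c1 k True t by auto
        show "1 \<le> n - t + 1" by simp
        fix y assume y: "y \<in> F" "1 \<le> y \<and> y \<le> 1 + t - 1"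
        obtain j where j: "j < r" "y = l!j" using mem y by blast
        show "y = x"
        proof (rule ccontr)
          assume "y \<noteq> x"
          then have "j \<noteq> 0" using j k True by (cases j) auto
          then have "2 \<le> r" "l!1 \<le> l!j" using j le by auto
          then show False using c2 y j by auto
        qed
      qed simp
    next
      case False
      show ?thesis
      proof (cases "k = r - 1")
        case True
        show ?thesis unfolding nonred_def
        proof (intro exI[of _ "n - t + 1"] conjI ballI impI)
          show "1 \<le> n - t + 1" "n - t + 1 \<le> n - t + 1" by auto
          show "n - t + 1 \<le> x" "x \<le> n - t + 1 + t - 1" using c6 k True t by auto
          fix y assume y: "y \<in> F" "n - t + 1 \<le> y \<and> y \<le> n - t + 1 + t - 1"
          obtain j where j: "j < r" "y = l!j" using mem y by blast
          show "y = x"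
          proof (rule ccontr)
            assume "y \<noteq> x"
            then have "j \<noteq> r - 1" using j k True by auto
            then have "2 \<le> r" "l!j \<le> l!(r-2)" using j le \<open>k \<noteq> 0\<close> True k by auto
            then show False using c5 y j by auto
          qed
        qed
      next
        case False2: False
        have kk: "0 < k" "k + 1 < r" using False False2 k by auto
        have d3: "l!k - l!(k-1) \<le> t" using c3[of "k-1"] kk by auto
        have d4: "l!(k+1) - l!(k-1) > t" using c4[of "k-1"] kk by auto
        have lk: "l!(k-1) < l!k" "l!k < l!(k+1)" using lt kk by auto
        have ln: "l!(k+1) \<le> n" using inF[of "k+1"] kk Fn by auto
        show ?thesis unfolding nonred_def
        proof (intro exI[of _ "l!(k-1) + 1"] conjI ballI impI)
          show "1 \<le> l!(k-1) + 1" by simp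
          show "l!(k-1) + 1 \<le> n - t + 1" using d4 ln lk by linarith
          show "l!(k-1) + 1 \<le> x" using lk k by simp
          show "x \<le> l!(k-1) + 1 + t - 1" using d3 lk k by linarith
          fix y assume y: "y \<in> F" "l!(k-1) + 1 \<le> y \<and> y \<le> l!(k-1) + 1 + t - 1"
          obtain j where j: "j < r" "y = l!j" using mem y by blast
          show "y = x"
          proof (rule ccontr)
            assume "y \<noteq> x"
            then have "j \<noteq> k" using j k by auto
            then have "j \<le> k - 1 \<or> k + 1 \<le> j" by auto
            then show False
            proof
              assume "j \<le> k - 1" then have "l!j \<le> l!(k-1)" using le j kk by auto
              then show False using y j by auto
            next
              assume "k + 1 \<le> j" then have "l!(k+1) \<le> l!j" using le j kk by auto
              then show False using y j d4 lk by linarith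
            qed
          qed
        qed
      qed
    qed
  qed
  show ?thesis unfolding mincover_def using Fn cov nr by blast
qed

lemma min_to_C:
  assumes t: "2 \<le> t" "t \<le> n" and M: "mincover n t F"
  shows "F \<in> C_set n t"
proof -
  define l where "l = sorted_list_of_set F"
  define r where "r = card F"
  have Fn: "F \<subseteq> {1..n}" and cov: "cover n t F" and nr: "\<And>x. x \<in> F \<Longrightarrow> nonred n t F x"
    using M by (auto simp: mincover_def)
  have fin: "finite F" using Fn finite_subset by blast
  have lt: "\<And>i j. i < r \<Longrightarrow> j < r \<Longrightarrow> l!i < l!j \<longleftrightarrow> i < j"
    unfolding l_def r_def using sl_mono_iff[OF fin] by blast
  have le: "\<And>i j. i < r \<Longrightarrow> j < r \<Longrightarrow> l!i \<le> l!j \<longleftrightarrow> i \<le> j"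
    unfolding l_def r_def using sl_mono_le_iff[OF fin] by blast
  have mem: "\<And>y. y \<in> F \<Longrightarrow> \<exists>j<r. y = l!j" unfolding l_def r_def using sl_mem[OF fin] by blast
  have inF: "\<And>j. j < r \<Longrightarrow> l!j \<in> F" unfolding l_def r_def using sl_in[OF fin] by blast
  have len: "length l = r" unfolding l_def r_def using sl_facts(2)[OF fin] .
  have "\<exists>x\<in>F. 1 \<le> x \<and> x \<le> 1 + t - 1" using cov[unfolded cover_def, rule_format, of 1] by simp
  then obtain x1 where x1: "x1 \<in> F" "1 \<le> x1" "x1 \<le> t" by auto
  then have Fne: "F \<noteq> {}" by auto
  have r1: "1 \<le> r" using fin Fne by (simp add: r_def Suc_le_eq card_gt_0_iff)
  have r0: "0 < r" "r - 1 < r" using r1 by auto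
  have "\<exists>x\<in>F. n - t + 1 \<le> x \<and> x \<le> n - t + 1 + t - 1" using cov[unfolded cover_def, rule_format, of "n - t + 1"] by simp
  then obtain xn where xn: "xn \<in> F" "n - t + 1 \<le> xn" by auto
  have c1: "1 \<le> l!0 \<and> l!0 \<le> t"
  proof -
    obtain j where "j < r" "x1 = l!j" using mem x1 by blast
    then have "l!0 \<le> x1" using le r1 by auto
    moreover have "l!0 \<in> F" using inF r1 by auto
    ultimately show ?thesis using Fn x1 by auto
  qed
  have c6: "n - t + 1 \<le> l!(r-1) \<and> l!(r-1) \<le> n"
  proof -
    obtain j where "j < r" "xn = l!j" using mem xn by blast
    then have "xn \<le> l!(r-1)" using le r1 by auto
    moreover have "l!(r-1) \<in> F" using inF r1 by auto
    ultimately show ?thesis using Fn xn by auto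
  qed
  have c2: "l!1 > t" if "2 \<le> r"
  proof (rule ccontr)
    assume "\<not> t < l!1"
    obtain w where w: "1 \<le> w" "w \<le> l!0" "l!0 \<le> w + t - 1" "\<And>y. y \<in> F \<Longrightarrow> w \<le> y \<and> y \<le> w + t - 1 \<Longrightarrow> y = l!0"
      using nr[OF inF[OF r0(1)]] unfolding nonred_def by blast
    have r2: "1 < r" using that by simp
    have o: "l!0 < l!1" using lt[of 0 1] r2 by simp
    have "w \<le> l!1" using o w(2) by linarith
    moreover have "l!1 \<le> w + t - 1" using \<open>\<not> t < l!1\<close> w(1) by linarith
    ultimately have "l!1 = l!0" using w(4)[OF inF[OF r2]] by blast
    then show False using o by simp
  qed
  have c3: "1 \<le> l!(j+1) - l!j \<and> l!(j+1) - l!j \<le> t" if j: "j + 1 < r" for j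
  proof
    show "1 \<le> l!(j+1) - l!j" using lt[of j "j+1"] j by auto
    show "l!(j+1) - l!j \<le> t"
    proof (rule ccontr)
      assume A: "\<not> l!(j+1) - l!j \<le> t"
      have "l!(j+1) \<le> n" using inF[of "j+1"] j Fn by auto
      then have "l!j + 1 \<le> n - t + 1" using A by linarith
      then have "\<exists>y\<in>F. l!j + 1 \<le> y \<and> y \<le> l!j + 1 + t - 1" using cov[unfolded cover_def, rule_format, of "l!j+1"] by simp
      then obtain y where y: "y \<in> F" "l!j + 1 \<le> y" "y \<le> l!j + 1 + t - 1" by auto
      obtain i where i: "i < r" "y = l!i" using mem y by blast
      have "j < i" using lt[of j i] i y j by auto
      moreover have "i < j + 1" using lt[of i "j+1"] i y j A by auto
      ultimately show False by simp
    qed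
  qed
  have c4: "l!(j+2) - l!j > t" if j: "j + 2 < r" for j
  proof -
    obtain w where w: "1 \<le> w" "w \<le> l!(j+1)" "l!(j+1) \<le> w + t - 1"
      "\<And>y. y \<in> F \<Longrightarrow> w \<le> y \<and> y \<le> w + t - 1 \<Longrightarrow> y = l!(j+1)"
      using nr[OF inF[of "j+1"]] j unfolding nonred_def by (metis Suc_eq_plus1 add_2_eq_Suc' add_lessD1)
    have o: "l!j < l!(j+1)" "l!(j+1) < l!(j+2)" using lt[of j "j+1"] lt[of "j+1" "j+2"] j by auto
    have jr: "j < r" "j + 2 < r" using j by auto
    have "\<not> (w \<le> l!j \<and> l!j \<le> w + t - 1)"
    proof
      assume "w \<le> l!j \<and> l!j \<le> w + t - 1"
      then have "l!j = l!(j+1)" using w(4)[OF inF[OF jr(1)]] by blast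
      then show False using o by simp
    qed
    then have A: "l!j < w" using o w(3) by linarith
    have "\<not> (w \<le> l!(j+2) \<and> l!(j+2) \<le> w + t - 1)"
    proof
      assume "w \<le> l!(j+2) \<and> l!(j+2) \<le> w + t - 1"
      then have "l!(j+2) = l!(j+1)" using w(4)[OF inF[OF jr(2)]] by blast
      then show False using o by simp
    qed
    then have B: "l!(j+2) > w + t - 1" using o w(2) by linarith
    from A B show ?thesis using t by linarith
  qed
  have c5: "l!(r-2) < n - t + 1" if "2 \<le> r"
  proof -
    obtain w where w: "1 \<le> w" "w \<le> n - t + 1" "w \<le> l!(r-1)" "l!(r-1) \<le> w + t - 1"
      "\<And>y. y \<in> F \<Longrightarrow> w \<le> y \<and> y \<le> w + t - 1 \<Longrightarrow> y = l!(r-1)"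
      using nr[OF inF[OF r0(2)]] unfolding nonred_def by blast
    have o: "l!(r-2) < l!(r-1)" using lt[of "r-2" "r-1"] that by auto
    have r2: "r - 2 < r" using that by simp
    have "\<not> (w \<le> l!(r-2) \<and> l!(r-2) \<le> w + t - 1)"
    proof
      assume "w \<le> l!(r-2) \<and> l!(r-2) \<le> w + t - 1"
      then have "l!(r-2) = l!(r-1)" using w(5)[OF inF[OF r2]] by blast
      then show False using o by simp
    qed
    then have "l!(r-2) < w" using o w(4) by linarith
    then show ?thesis using w by linarith
  qed
  have CC: "1 \<le> l!0 \<and> l!0 \<le> t
      \<and> (2 \<le> r \<longrightarrow> l!1 > t)
      \<and> (\<forall>j. j + 1 < r \<longrightarrow> 1 \<le> l!(j+1) - l!j \<and> l!(j+1) - l!j \<le> t)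
      \<and> (\<forall>j. j + 2 < r \<longrightarrow> l!(j+2) - l!j > t)
      \<and> (2 \<le> r \<longrightarrow> l!(r-2) < n - t + 1)
      \<and> n - t + 1 \<le> l!(r-1) \<and> l!(r-1) \<le> n"
    using c1 c2 c3 c4 c5 c6 by blast
  show ?thesis
    by (rule C_setI[OF Fn Fne l_def len[symmetric] CC])
qed

lemma C_iff_min:
  assumes "2 \<le> t" "t \<le> n"
  shows "F \<in> C_set n t \<longleftrightarrow> mincover n t F"
  using C_to_min[OF assms] min_to_C[OF assms] by blast



function dd :: "(nat \<Rightarrow> nat) \<Rightarrow> nat \<Rightarrow> nat \<Rightarrow> nat" where
  "dd a t 0 = 0"
| "dd a t (Suc j) = a (Suc j) + Min ((\<lambda>i. dd a t i) ` {Suc j - t..j})"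
  by pat_completeness auto
termination
  by (relation "measure (\<lambda>(a, t, j). j)") auto

lemma dd_rec:
  assumes "1 \<le> j"
  shows "dd a t j = a j + Min ((\<lambda>i. dd a t i) ` {j - t..j - 1})"
  using assms by (cases j) auto

lemma dd_props:
  assumes "1 \<le> t" "1 \<le> j"
  shows "\<exists>i\<in>{j - t..j - 1}. dd a t j = a j + dd a t i"
    "\<And>i. i \<in> {j - t..j - 1} \<Longrightarrow> dd a t j \<le> a j + dd a t i"
    "a j \<le> dd a t j"
proof -
  have ne: "{j - t..j - 1} \<noteq> {}" using assms by auto
  have fin: "finite {j - t..j - 1}" by simp
  have "Min ((\<lambda>i. dd a t i) ` {j - t..j - 1}) \<in> (\<lambda>i. dd a t i) ` {j - t..j - 1}"
    by (rule Min_in) (use ne fin in auto)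
  then show "\<exists>i\<in>{j - t..j - 1}. dd a t j = a j + dd a t i"
    using dd_rec[OF assms(2)] by auto
  show "dd a t j \<le> a j + dd a t i" if "i \<in> {j - t..j - 1}" for i
  proof -
    have "Min ((\<lambda>i. dd a t i) ` {j - t..j - 1}) \<le> dd a t i" using that fin by simp
    then show ?thesis using dd_rec[OF assms(2)] by simp
  qed
  show "a j \<le> dd a t j" using dd_rec[OF assms(2)] by simp
qed

lemma dd_chain:
  assumes t: "1 \<le> t"
  shows "1 \<le> j \<Longrightarrow> \<exists>G \<subseteq> {1..j}. j \<in> G \<and> sum a G = dd a t j \<and>
      (\<forall>w. 1 \<le> w \<and> w + t - 1 \<le> j \<longrightarrow> (\<exists>x\<in>G. w \<le> x \<and> x \<le> w + t - 1))"
proof (induction j rule: less_induct)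
  case (less j)
  obtain i where i: "i \<in> {j - t..j - 1}" "dd a t j = a j + dd a t i"
    using dd_props(1)[OF t less.prems] by blast
  show ?case
  proof (cases "i = 0")
    case True
    have jt: "j \<le> t" using i True by auto
    show ?thesis
    proof (intro exI[of _ "{j}"] conjI allI impI)
      show "{j} \<subseteq> {1..j}" using less.prems by auto
      show "sum a {j} = dd a t j" using i True by simp
      fix w assume w: "1 \<le> w \<and> w + t - 1 \<le> j"
      then have "w = 1" using jt by linarith
      then show "\<exists>x\<in>{j}. w \<le> x \<and> x \<le> w + t - 1" using w jt less.prems by auto
    qed simp
  next
    case False
    have i1: "1 \<le> i" "i < j" using False i less.prems by auto
    obtain G where G: "G \<subseteq> {1..i}" "i \<in> G" "sum a G = dd a t i"
      "\<forall>w. 1 \<le> w \<and> w + t - 1 \<le> i \<longrightarrow> (\<exists>x\<in>G. w \<le> x \<and> x \<le> w + t - 1)"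
      using less.IH[OF i1(2) i1(1)] by blast
    have jG: "j \<notin> G" using G(1) i1 by auto
    have finG: "finite G" using G(1) finite_subset by blast
    show ?thesis
    proof (intro exI[of _ "insert j G"] conjI allI impI)
      show "insert j G \<subseteq> {1..j}" using G(1) i1 less.prems by auto
      show "j \<in> insert j G" by simp
      show "sum a (insert j G) = dd a t j" using jG finG G(3) i by simp
      fix w assume w: "1 \<le> w \<and> w + t - 1 \<le> j"
      show "\<exists>x\<in>insert j G. w \<le> x \<and> x \<le> w + t - 1"
      proof (cases "w + t - 1 \<le> i")
        case True then show ?thesis using G(4) w by blast
      next
        case False
        show ?thesis
        proof (cases "w \<le> i")
          case True then show ?thesis using False G(2) by (intro bexI[of _ i]) auto
        next
          case False2: False
          have "j - t \<le> i" using i by auto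
          then have "w \<le> j \<and> j \<le> w + t - 1" using w False2 t by linarith
          then show ?thesis by blast
        qed
      qed
    qed
  qed
qed

lemma dd_cover:
  fixes a :: "nat \<Rightarrow> nat"
  assumes t: "1 \<le> t" "t \<le> n"
  defines "D \<equiv> Min ((\<lambda>i. dd a t i) ` {n + 1 - t..n})"
  shows "\<exists>G \<subseteq> {1..n}. cover n t G \<and> sum a G = D"
proof -
  have ne: "{n + 1 - t..n} \<noteq> {}" using t by auto
  have "D \<in> (\<lambda>i. dd a t i) ` {n + 1 - t..n}" unfolding D_def by (rule Min_in) (use ne in auto)
  then obtain i where i: "i \<in> {n + 1 - t..n}" "dd a t i = D" by auto
  have i1: "1 \<le> i" using i t by auto
  obtain G where G: "G \<subseteq> {1..i}" "i \<in> G" "sum a G = dd a t i"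
      "\<forall>w. 1 \<le> w \<and> w + t - 1 \<le> i \<longrightarrow> (\<exists>x\<in>G. w \<le> x \<and> x \<le> w + t - 1)"
  proof -
    have "\<exists>G. G \<subseteq> {1..i} \<and> i \<in> G \<and> sum a G = dd a t i \<and>
      (\<forall>w. 1 \<le> w \<and> w + t - 1 \<le> i \<longrightarrow> (\<exists>x\<in>G. w \<le> x \<and> x \<le> w + t - 1))"
      using dd_chain[OF t(1) i1, of a] by simp
    then show ?thesis using that by blast
  qed
  show ?thesis
  proof (intro exI[of _ G] conjI)
    show "G \<subseteq> {1..n}" using G(1) i by auto
    show "sum a G = D" using G(3) i by simp
    show "cover n t G" unfolding cover_def
    proof (intro allI impI)
      fix w assume w: "1 \<le> w \<and> w \<le> n - t + 1"
      show "\<exists>x\<in>G. w \<le> x \<and> x \<le> w + t - 1"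
      proof (cases "w + t - 1 \<le> i")
        case True then show ?thesis using G(4) w by blast
      next
        case False
        have "w \<le> i" using w i t by auto
        then show ?thesis using False G(2) by (intro bexI[of _ i]) auto
      qed
    qed
  qed
qed

lemma dd_layer:
  assumes t: "1 \<le> t" "t \<le> n"
    and k: "1 \<le> k" "k \<le> Min ((\<lambda>i. dd a t i) ` {n + 1 - t..n})"
  shows "\<exists>q. q + t \<le> n \<and> (\<forall>j. q + 1 \<le> j \<and> j \<le> q + t \<longrightarrow> dd a t j - a j < k \<and> k \<le> dd a t j)"
proof -
  define S where "S = {i. i \<le> n \<and> dd a t i < k}"
  have S0: "0 \<in> S" using k by (simp add: S_def)
  have finS: "finite S" unfolding S_def by simp
  define q where "q = Max S"
  have qS: "q \<in> S" unfolding q_def using S0 finS Max_in by blast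
  have qmax: "\<And>i. i \<in> S \<Longrightarrow> i \<le> q" unfolding q_def using finS by simp
  have qt: "q + t \<le> n"
  proof (rule ccontr)
    assume "\<not> q + t \<le> n"
    then have "q \<in> {n + 1 - t..n}" using qS by (auto simp: S_def)
    then have "Min ((\<lambda>i. dd a t i) ` {n + 1 - t..n}) \<le> dd a t q" by simp
    then show False using qS k by (auto simp: S_def)
  qed
  show ?thesis
  proof (intro exI[of _ q] conjI allI impI)
    show "q + t \<le> n" by (rule qt)
    fix j assume j: "q + 1 \<le> j \<and> j \<le> q + t"
    have jn: "j \<le> n" using j qt by linarith
    show "k \<le> dd a t j"
    proof (rule ccontr)
      assume "\<not> k \<le> dd a t j"
      then have "j \<in> S" using jn by (simp add: S_def)
      then show False using qmax j by fastforce
    qed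
    have j1: "1 \<le> j" using j by simp
    have "q \<in> {j - t..j - 1}" using j by auto
    then have "dd a t j \<le> a j + dd a t q" using dd_props(2)[OF t(1) j1] by blast
    then show "dd a t j - a j < k" using qS by (auto simp: S_def)
  qed
qed

lemma sum_pv_Epow:
  assumes "\<And>k. k < s \<Longrightarrow> 1 \<le> g k \<and> g k \<le> n - t + 1"
  shows "(\<Sum>k<s. pv t (g k)) \<in> Epow (PE n t) s"
  using assms
proof (induction s)
  case 0 then show ?case by simp
next
  case (Suc s)
  have "(\<Sum>k<s. pv t (g k)) \<in> Epow (PE n t) s" using Suc by simp
  moreover have "pv t (g s) \<in> PE n t" using Suc.prems[of s] unfolding PE_def by auto
  ultimately show ?case by (auto simp: sum.lessThan_Suc psum_def)
qed

lemma sum_ind_card: "(\<Sum>k<(s::nat). if P k then 1 else (0::nat)) = card {k. k < s \<and> P k}"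
proof -
  have "(\<Sum>k<s. if P k then 1 else (0::nat)) = (\<Sum>k\<in>{k\<in>{..<s}. P k}. 1)"
    by (rule sum.inter_filter[symmetric]) simp
  also have "{k\<in>{..<s}. P k} = {k. k < s \<and> P k}" by auto
  finally show ?thesis by simp
qed

lemma pack:
  assumes t: "2 \<le> t" "t \<le> n" and hyp: "\<forall>F\<in>C_set n t. s \<le> degF F m"
  shows "\<exists>e\<in>Epow (PE n t) s. dv e m"
proof -
  define a where "a = Poly_Mapping.lookup m"
  have t1: "1 \<le> t" using t by simp
  define D where "D = Min ((\<lambda>i. dd a t i) ` {n + 1 - t..n})"
  obtain G where G: "G \<subseteq> {1..n}" "cover n t G" "sum a G = D"
    using dd_cover[OF t1 t(2), of a] unfolding D_def by blast
  have finG: "finite G" using G(1) finite_subset by blast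
  obtain H where H: "H \<subseteq> G" "cover n t H" "\<forall>x\<in>H. nonred n t H x"
    using exists_mincover[OF finG G(2)] by blast
  have "mincover n t H" unfolding mincover_def using H G(1) by blast
  then have "H \<in> C_set n t" using C_iff_min[OF t] by blast
  then have "s \<le> degF H m" using hyp by blast
  also have "degF H m = sum a H" unfolding degF_def a_def by simp
  also have "\<dots> \<le> sum a G" using H(1) finG by (simp add: sum_mono2)
  finally have sD: "s \<le> D" using G(3) by simp
  have "\<forall>k<s. \<exists>q. q + t \<le> n \<and> (\<forall>j. q + 1 \<le> j \<and> j \<le> q + t \<longrightarrow> dd a t j - a j < k + 1 \<and> k + 1 \<le> dd a t j)"
  proof (intro allI impI)
    fix k assume "k < s"
    then show "\<exists>q. q + t \<le> n \<and> (\<forall>j. q + 1 \<le> j \<and> j \<le> q + t \<longrightarrow> dd a t j - a j < k + 1 \<and> k + 1 \<le> dd a t j)"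
      using dd_layer[OF t1 t(2), of "k + 1" a] sD unfolding D_def by simp
  qed
  then obtain f where f: "\<And>k. k < s \<Longrightarrow> f k + t \<le> n \<and> (\<forall>j. f k + 1 \<le> j \<and> j \<le> f k + t \<longrightarrow> dd a t j - a j < k + 1 \<and> k + 1 \<le> dd a t j)"
    by metis
  define e where "e = (\<Sum>k<s. pv t (f k + 1))"
  have eE: "e \<in> Epow (PE n t) s" unfolding e_def
    by (rule sum_pv_Epow) (use f in fastforce)
  have "dv e m" unfolding dv_def
  proof
    fix j
    have "Poly_Mapping.lookup e j = (\<Sum>k<s. if f k + 1 \<le> j \<and> j \<le> f k + 1 + t - 1 then 1 else 0)"
      unfolding e_def lookup_sum lookup_pv by simp
    also have "\<dots> = card {k. k < s \<and> (f k + 1 \<le> j \<and> j \<le> f k + 1 + t - 1)}"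
      by (rule sum_ind_card)
    also have "\<dots> \<le> card {dd a t j - a j..<dd a t j}"
    proof (rule card_mono)
      show "finite {dd a t j - a j..<dd a t j}" by simp
      show "{k. k < s \<and> f k + 1 \<le> j \<and> j \<le> f k + 1 + t - 1} \<subseteq> {dd a t j - a j..<dd a t j}"
      proof
        fix k assume "k \<in> {k. k < s \<and> f k + 1 \<le> j \<and> j \<le> f k + 1 + t - 1}"
        then have k: "k < s" "f k + 1 \<le> j" "j \<le> f k + t" using t1 by auto
        then have "dd a t j - a j < k + 1 \<and> k + 1 \<le> dd a t j" using f[OF k(1)] by blast
        then show "k \<in> {dd a t j - a j..<dd a t j}" by auto
      qed
    qed
    also have "\<dots> \<le> a j" by simp
    finally show "Poly_Mapping.lookup e j \<le> Poly_Mapping.lookup m j" unfolding a_def .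
  qed
  then show ?thesis using eE by blast
qed

lemma Epow_degF:
  assumes cov: "cover n t F" and fin: "finite F" and t: "1 \<le> t"
  shows "e \<in> Epow (PE n t) s \<Longrightarrow> s \<le> degF F e"
proof (induction s arbitrary: e)
  case 0 then show ?case by simp
next
  case (Suc s)
  then obtain a b where ab: "e = a + b" "a \<in> Epow (PE n t) s" "b \<in> PE n t"
    by (auto simp: psum_def)
  obtain i where i: "b = pv t i" "1 \<le> i" "i \<le> n - t + 1" using ab(3) by (auto simp: PE_def)
  obtain x where x: "x \<in> F" "i \<le> x" "x \<le> i + t - 1"
    using cov[unfolded cover_def, rule_format, of i] i by blast
  have "Poly_Mapping.lookup b x = 1" using x i by (simp add: lookup_pv)
  moreover have "Poly_Mapping.lookup b x \<le> degF F b" unfolding degF_def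
    by (rule member_le_sum) (use x fin in auto)
  ultimately have "1 \<le> degF F b" by simp
  moreover have "s \<le> degF F a" using Suc.IH[OF ab(2)] .
  ultimately show ?case using ab(1) by (simp add: degF_add)
qed

lemma dv_degF: "dv e m \<Longrightarrow> degF F e \<le> degF F m"
  unfolding degF_def dv_def by (intro sum_mono) auto

lemma mono_key:
  assumes t: "2 \<le> t" "t \<le> n"
  shows "(\<exists>e\<in>Epow (PE n t) s. dv e m) \<longleftrightarrow> (\<forall>F\<in>C_set n t. s \<le> degF F m)"
proof
  assume "\<exists>e\<in>Epow (PE n t) s. dv e m"
  then obtain e where e: "e \<in> Epow (PE n t) s" "dv e m" by blast
  show "\<forall>F\<in>C_set n t. s \<le> degF F m"
  proof
    fix F assume "F \<in> C_set n t"
    then have M: "mincover n t F" using C_iff_min[OF t] by blast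
    then have "cover n t F" "finite F" unfolding mincover_def using finite_subset by auto
    then have "s \<le> degF F e" using Epow_degF e(1) t by auto
    also have "\<dots> \<le> degF F m" using dv_degF[OF e(2)] .
    finally show "s \<le> degF F m" .
  qed
next
  assume "\<forall>F\<in>C_set n t. s \<le> degF F m"
  then show "\<exists>e\<in>Epow (PE n t) s. dv e m" using pack[OF t] by blast
qed

lemma var_polyS: "i \<in> {1..n} \<Longrightarrow> (var i :: 'a::field mpoly) \<in> polyS n"
  unfolding var_def by (rule polyS_single) simp

lemma degF_unit: "finite F \<Longrightarrow> i \<in> F \<Longrightarrow> degF F (Poly_Mapping.single i 1) = 1"
proof -
  assume "finite F" "i \<in> F"
  have "degF F (Poly_Mapping.single i 1) = (\<Sum>y\<in>F. if y = i then 1 else 0)"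
    unfolding degF_def by (intro sum.cong) (auto simp: lookup_single)
  also have "\<dots> = 1" using \<open>finite F\<close> \<open>i \<in> F\<close> by simp
  finally show ?thesis .
qed

lemma var_QS: "finite F \<Longrightarrow> i \<in> F \<Longrightarrow> i \<in> {1..n} \<Longrightarrow> (var i :: 'a::field mpoly) \<in> QS n F 1"
  using var_polyS[of i n] degF_unit[of F i] unfolding QS_def var_def by simp

lemma QS_mult: "p \<in> QS n F a \<Longrightarrow> q \<in> QS n F b \<Longrightarrow> p * q \<in> QS n F (a + b)"
proof -
  assume p: "p \<in> QS n F a" and q: "q \<in> QS n F b"
  show ?thesis unfolding QS_def
  proof (intro CollectI conjI ballI)
    show "p * q \<in> polyS n" using p q by (auto simp: QS_def intro: polyS_mult)
    fix m assume "m \<in> Poly_Mapping.keys (p * q)"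
    then obtain x y where xy: "m = x + y" "x \<in> Poly_Mapping.keys p" "y \<in> Poly_Mapping.keys q"
      using keys_mult[of p q] by blast
    have "a \<le> degF F x" "b \<le> degF F y" using p q xy by (auto simp: QS_def)
    then show "a + b \<le> degF F m" unfolding xy(1) degF_add by linarith
  qed
qed

lemma QS_one: "(1 :: 'a::field mpoly) \<in> QS n F 0"
  by (simp add: QS_def)

lemma var_pow_QS: "finite F \<Longrightarrow> i \<in> F \<Longrightarrow> i \<in> {1..n} \<Longrightarrow> (var i :: 'a::field mpoly) ^ s \<in> QS n F s"
proof (induction s)
  case 0 then show ?case using QS_one by simp
next
  case (Suc s)
  then show ?case using QS_mult[OF var_QS[OF Suc.prems] Suc.IH[OF Suc.prems]] by simp
qed

lemma polyS_pow: "q \<in> polyS n \<Longrightarrow> q ^ s \<in> polyS n"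
  by (induction s) (auto intro: polyS_mult)

lemma prime_one: "prime_ideal n P \<Longrightarrow> (1 :: 'a::field mpoly) \<notin> P"
proof
  assume P: "prime_ideal n P" and "1 \<in> P"
  then have "\<forall>r\<in>polyS n. r * 1 \<in> P" unfolding prime_ideal_def is_ideal_def by blast
  then have "polyS n \<subseteq> P" by auto
  moreover have "P \<subseteq> polyS n" using P unfolding prime_ideal_def is_ideal_def by blast
  ultimately show False using P unfolding prime_ideal_def by blast
qed

lemma prime_prod:
  fixes q :: "'b \<Rightarrow> 'a::field mpoly"
  assumes P: "prime_ideal n P" and fin: "finite K"
  shows "(\<forall>k\<in>K. q k \<in> polyS n) \<Longrightarrow> prod q K \<in> P \<Longrightarrow> \<exists>k\<in>K. q k \<in> P"
  using fin
proof (induction K rule: finite_induct)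
  case empty then show ?case using prime_one[OF P] by simp
next
  case (insert x K)
  have "q x * prod q K \<in> P" using insert by simp
  moreover have "q x \<in> polyS n" "prod q K \<in> polyS n" using insert by (auto intro: polyS_prod)
  ultimately have "q x \<in> P \<or> prod q K \<in> P" using P unfolding prime_ideal_def by blast
  then show ?case using insert by blast
qed

lemma prime_pow:
  fixes q :: "'a::field mpoly"
  assumes P: "prime_ideal n P" and q: "q \<in> polyS n" and qs: "q ^ s \<in> P"
  shows "q \<in> P"
proof -
  have "prod (\<lambda>_. q) {..<s} = q ^ s" by simp
  then have "prod (\<lambda>_. q) {..<s} \<in> P" using qs by simp
  then show ?thesis using prime_prod[OF P, of "{..<s}" "\<lambda>_. q"] q by auto
qed

lemma shift_lookup:
  fixes g :: "'a::field mpoly"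
  shows "Poly_Mapping.lookup (g * Poly_Mapping.single e 1) (m + e) = Poly_Mapping.lookup g m"
proof -
  have "g * Poly_Mapping.single e 1 = (\<Sum>x\<in>Poly_Mapping.keys g. Poly_Mapping.single x (Poly_Mapping.lookup g x)) * Poly_Mapping.single e 1"
    by (rule arg_cong[where f="\<lambda>y. y * Poly_Mapping.single e 1"], rule poly_sum_single)
  also have "\<dots> = (\<Sum>x\<in>Poly_Mapping.keys g. Poly_Mapping.single (x + e) (Poly_Mapping.lookup g x))"
    by (simp add: sum_distrib_right mult_single)
  finally have eq: "g * Poly_Mapping.single e 1 = (\<Sum>x\<in>Poly_Mapping.keys g. Poly_Mapping.single (x + e) (Poly_Mapping.lookup g x))" .
  have "Poly_Mapping.lookup (g * Poly_Mapping.single e 1) (m + e) = (\<Sum>x\<in>Poly_Mapping.keys g. if x = m then Poly_Mapping.lookup g x else 0)"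
    unfolding eq lookup_sum by (intro sum.cong) (auto simp: lookup_single)
  also have "\<dots> = Poly_Mapping.lookup g m" by (auto simp: in_keys_iff)
  finally show ?thesis .
qed

lemma shift_keys:
  fixes g :: "'a::field mpoly"
  shows "Poly_Mapping.keys (g * Poly_Mapping.single e 1) = (\<lambda>m. m + e) ` Poly_Mapping.keys g"
proof
  show "Poly_Mapping.keys (g * Poly_Mapping.single e 1) \<subseteq> (\<lambda>m. m + e) ` Poly_Mapping.keys g"
    using keys_mult[of g "Poly_Mapping.single e 1"] by auto
  show "(\<lambda>m. m + e) ` Poly_Mapping.keys g \<subseteq> Poly_Mapping.keys (g * Poly_Mapping.single e 1)"
    using shift_lookup[of g e] by (auto simp: in_keys_iff)
qed

lemma witness:
  fixes n t s :: nat
  assumes t: "2 \<le> t" "t \<le> n" and s: "1 \<le> s" and F: "F \<in> C_set n t"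
  shows "\<exists>f\<in>polyS n. QS n F 1 = {g \<in> polyS n. g * f \<in> (MI n (Epow (PE n t) s) :: 'a::field mpoly set)}"
proof -
  have t1: "1 \<le> t" using t by simp
  have M: "mincover n t F" using C_iff_min[OF t] F by blast
  have Fn: "F \<subseteq> {1..n}" and cov: "cover n t F" and nr: "\<And>x. x \<in> F \<Longrightarrow> nonred n t F x"
    using M unfolding mincover_def by auto
  have fin: "finite F" using Fn finite_subset by blast
  have Fne: "F \<noteq> {}" using C_setD(2)[OF F refl refl] .
  obtain i0 where i0: "i0 \<in> F" using Fne by blast
  define e0 where "e0 = (\<Sum>j\<in>{1..n} - F. Poly_Mapping.single j s) + Poly_Mapping.single i0 (s - 1)"
  have le0: "Poly_Mapping.lookup e0 j = (if j \<in> {1..n} - F then s else 0) + (if j = i0 then s - 1 else 0)" for j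
  proof -
    have "Poly_Mapping.lookup (\<Sum>j\<in>{1..n} - F. Poly_Mapping.single j s) j = (\<Sum>k\<in>{1..n} - F. if k = j then s else 0)"
      unfolding lookup_sum by (intro sum.cong) (auto simp: lookup_single)
    also have "\<dots> = (if j \<in> {1..n} - F then s else 0)" by simp
    finally show ?thesis unfolding e0_def lookup_add by (simp add: lookup_single)
  qed
  have de0: "degF F e0 = s - 1"
  proof -
    have "degF F e0 = (\<Sum>j\<in>F. if j = i0 then s - 1 else 0)"
      unfolding degF_def by (intro sum.cong) (auto simp: le0)
    also have "\<dots> = s - 1" using fin i0 by simp
    finally show ?thesis .
  qed
  have ke0: "Poly_Mapping.keys e0 \<subseteq> {1..n}"
  proof
    fix j assume "j \<in> Poly_Mapping.keys e0"
    then have "Poly_Mapping.lookup e0 j \<noteq> 0" by (simp add: in_keys_iff)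
    then have "j \<in> {1..n} - F \<or> j = i0" unfolding le0 by (auto split: if_splits)
    then show "j \<in> {1..n}" using i0 Fn by auto
  qed
  define f :: "'a mpoly" where "f = Poly_Mapping.single e0 1"
  have fS: "f \<in> polyS n" unfolding f_def by (rule polyS_single[OF ke0])
  have W: "(\<exists>q\<in>Epow (PE n t) s. dv q (m + e0)) \<longleftrightarrow> 1 \<le> degF F m" for m
  proof
    assume "\<exists>q\<in>Epow (PE n t) s. dv q (m + e0)"
    then obtain q where q: "q \<in> Epow (PE n t) s" "dv q (m + e0)" by blast
    have "s \<le> degF F q" using Epow_degF[OF cov fin t1 q(1)] .
    also have "\<dots> \<le> degF F (m + e0)" using dv_degF[OF q(2)] .
    also have "\<dots> = degF F m + (s - 1)" by (simp add: degF_add de0)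
    finally show "1 \<le> degF F m" using s by linarith
  next
    assume dm: "1 \<le> degF F m"
    obtain i where i: "i \<in> F" "1 \<le> Poly_Mapping.lookup m i"
    proof (rule ccontr)
      assume "\<not> thesis"
      then have "\<forall>i\<in>F. Poly_Mapping.lookup m i = 0" using that by force
      then have "degF F m = 0" unfolding degF_def by simp
      then show False using dm by simp
    qed
    obtain wi where wi: "1 \<le> wi" "wi \<le> n - t + 1" "wi \<le> i" "i \<le> wi + t - 1"
      "\<And>y. y \<in> F \<Longrightarrow> wi \<le> y \<and> y \<le> wi + t - 1 \<Longrightarrow> y = i"
      using nr[OF i(1)] unfolding nonred_def by blast
    obtain w0 where w0: "1 \<le> w0" "w0 \<le> n - t + 1" "w0 \<le> i0" "i0 \<le> w0 + t - 1"
      "\<And>y. y \<in> F \<Longrightarrow> w0 \<le> y \<and> y \<le> w0 + t - 1 \<Longrightarrow> y = i0"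
      using nr[OF i0] unfolding nonred_def by blast
    define g where "g k = (if k < s - 1 then w0 else wi)" for k
    define q where "q = (\<Sum>k<s. pv t (g k))"
    have qE: "q \<in> Epow (PE n t) s" unfolding q_def
      by (rule sum_pv_Epow) (use w0 wi in \<open>auto simp: g_def\<close>)
    define P0 where "P0 j = Poly_Mapping.lookup (pv t w0) j" for j
    define Pi where "Pi j = Poly_Mapping.lookup (pv t wi) j" for j
    have lq: "Poly_Mapping.lookup q j = (s - 1) * P0 j + Pi j" for j
    proof -
      have ss: "s = Suc (s - 1)" using s by simp
      have "Poly_Mapping.lookup q j = (\<Sum>k<Suc (s - 1). Poly_Mapping.lookup (pv t (g k)) j)"
        unfolding q_def lookup_sum using ss by metis
      also have "\<dots> = (\<Sum>k<s - 1. Poly_Mapping.lookup (pv t (g k)) j) + Poly_Mapping.lookup (pv t (g (s - 1))) j"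
        by simp
      also have "(\<Sum>k<s - 1. Poly_Mapping.lookup (pv t (g k)) j) = (\<Sum>k<s - 1. P0 j)"
        by (intro sum.cong) (auto simp: g_def P0_def)
      also have "\<dots> = (s - 1) * P0 j" by simp
      also have "Poly_Mapping.lookup (pv t (g (s - 1))) j = Pi j" by (simp add: g_def Pi_def)
      finally show ?thesis .
    qed
    have P0v: "P0 j = 0 \<or> (P0 j = 1 \<and> w0 \<le> j \<and> j \<le> w0 + t - 1)" for j
      unfolding P0_def lookup_pv by auto
    have Piv: "Pi j = 0 \<or> (Pi j = 1 \<and> wi \<le> j \<and> j \<le> wi + t - 1)" for j
      unfolding Pi_def lookup_pv by auto
    have "dv q (m + e0)" unfolding dv_def
    proof
      fix j
      have goal: "(s - 1) * P0 j + Pi j \<le> Poly_Mapping.lookup m j + Poly_Mapping.lookup e0 j"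
      proof (cases "j \<in> F")
        case True
        then have e0j: "Poly_Mapping.lookup e0 j = (if j = i0 then s - 1 else 0)" by (simp add: le0)
        show ?thesis
        proof (cases "P0 j = 0")
          case P00: True
          show ?thesis
          proof (cases "Pi j = 0")
            case True then show ?thesis using P00 by simp
          next
            case False
            then have "Pi j = 1" "j = i" using Piv[of j] wi(5)[OF \<open>j \<in> F\<close>] by auto
            then show ?thesis using P00 i(2) by simp
          qed
        next
          case P01: False
          then have P0j: "P0 j = 1" "j = i0" using P0v[of j] w0(5)[OF \<open>j \<in> F\<close>] by auto
          show ?thesis
          proof (cases "Pi j = 0")
            case True then show ?thesis using P0j e0j by simp
          next
            case False
            then have "Pi j = 1" "j = i" using Piv[of j] wi(5)[OF \<open>j \<in> F\<close>] by auto
            then show ?thesis using P0j e0j i(2) s by simp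
          qed
        qed
      next
        case False
        show ?thesis
        proof (cases "j \<in> {1..n}")
          case True
          then have "Poly_Mapping.lookup e0 j \<ge> s" using False by (simp add: le0)
          moreover have "(s - 1) * P0 j + Pi j \<le> s" using P0v[of j] Piv[of j] s by auto
          ultimately show ?thesis by linarith
        next
          case False2: False
          have "P0 j = 0" using P0v[of j] w0 t False2 by auto
          moreover have "Pi j = 0" using Piv[of j] wi t False2 by auto
          ultimately show ?thesis by simp
        qed
      qed
      then show "Poly_Mapping.lookup q j \<le> Poly_Mapping.lookup (m + e0) j"
        unfolding lq lookup_add .
    qed
    then show "\<exists>q\<in>Epow (PE n t) s. dv q (m + e0)" using qE by blast
  qed
  have eq: "g \<in> QS n F 1 \<longleftrightarrow> g \<in> polyS n \<and> g * f \<in> (MI n (Epow (PE n t) s) :: 'a mpoly set)" for g :: "'a mpoly"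
  proof (cases "g \<in> polyS n")
    case True
    have "g * f \<in> (MI n (Epow (PE n t) s) :: 'a mpoly set) \<longleftrightarrow> (\<forall>k\<in>Poly_Mapping.keys (g * f). \<exists>q\<in>Epow (PE n t) s. dv q k)"
      using polyS_mult[OF True fS] by (simp add: MI_def)
    also have "\<dots> \<longleftrightarrow> (\<forall>m\<in>Poly_Mapping.keys g. \<exists>q\<in>Epow (PE n t) s. dv q (m + e0))"
      unfolding f_def shift_keys by simp
    also have "\<dots> \<longleftrightarrow> (\<forall>m\<in>Poly_Mapping.keys g. 1 \<le> degF F m)" using W by simp
    also have "\<dots> \<longleftrightarrow> g \<in> QS n F 1" using True by (simp add: QS_def)
    finally show ?thesis using True by simp
  next
    case False then show ?thesis by (simp add: QS_def)
  qed
  show ?thesis by (rule bexI[of _ f]) (use eq fS in auto)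
qed

theorem corollary2p8:
  fixes n t s :: nat
  assumes "2 \<le> t" and "t \<le> n" and "1 \<le> s"
  shows "Ass n (ideal_pow n (path_ideal n t :: 'a::field mpoly set) s)
           = prime_of n ` C_set n t"
proof -
  have t: "2 \<le> t" "t \<le> n" using assms by auto
  have t1: "1 \<le> t" using t by simp
  define I :: "'a mpoly set" where "I = MI n (Epow (PE n t) s)"
  have Ieq: "ideal_pow n (path_ideal n t :: 'a mpoly set) s = I"
    unfolding I_def path_ideal_MI[OF t1 t(2)] by (rule pow_MI[OF valid_PE[OF t1 t(2)]])
  have memI: "p \<in> I \<longleftrightarrow> p \<in> polyS n \<and> (\<forall>F\<in>C_set n t. p \<in> QS n F s)" for p
  proof -
    have "p \<in> I \<longleftrightarrow> p \<in> polyS n \<and> (\<forall>m\<in>Poly_Mapping.keys p. \<forall>F\<in>C_set n t. s \<le> degF F m)"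
      unfolding I_def MI_def using mono_key[OF t] by simp
    also have "\<dots> \<longleftrightarrow> p \<in> polyS n \<and> (\<forall>F\<in>C_set n t. p \<in> QS n F s)"
      unfolding QS_def by blast
    finally show ?thesis .
  qed
  have Cfin: "finite (C_set n t)"
  proof (rule finite_subset)
    show "C_set n t \<subseteq> Pow {1..n}" using C_setD(1)[OF _ refl refl] by blast
  qed simp
  have CF: "F \<subseteq> {1..n}" "finite F" if "F \<in> C_set n t" for F
    using C_setD(1)[OF that refl refl] finite_subset by auto
  have POF: "prime_of n F = (QS n F 1 :: 'a mpoly set)" if "F \<in> C_set n t" for F
    using prime_of_MI[OF CF(1)[OF that], where 'a='a] MI_UE_QS[OF CF(2)[OF that], where 'a='a, of n] by simp
  show ?thesis
    unfolding Ieq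
  proof
    show "Ass n I \<subseteq> prime_of n ` C_set n t"
    proof
      fix P assume "P \<in> Ass n I"
      then obtain f where P: "prime_ideal n P" and fS: "f \<in> polyS n" and Pf: "P = {g \<in> polyS n. g * f \<in> I}"
        unfolding Ass_def by blast
      have Pid: "is_ideal n P" using P unfolding prime_ideal_def by blast
      define FF where "FF = {F \<in> C_set n t. f \<notin> QS n F s}"
      have FFfin: "finite FF" unfolding FF_def using Cfin by simp
      have ex: "\<exists>F\<in>FF. \<forall>i\<in>F. var i \<in> P"
      proof (rule ccontr)
        assume "\<not> (\<exists>F\<in>FF. \<forall>i\<in>F. var i \<in> P)"
        then have "\<forall>F\<in>FF. \<exists>i. i \<in> F \<and> var i \<notin> P" by blast
        then obtain ch where ch: "\<And>F. F \<in> FF \<Longrightarrow> ch F \<in> F \<and> var (ch F) \<notin> P" by metis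
        have chn: "ch F \<in> {1..n}" if "F \<in> FF" for F
          using ch[OF that] CF(1)[of F] that unfolding FF_def by blast
        have pt: "(var (ch G) :: 'a mpoly) ^ s \<in> polyS n" if "G \<in> FF" for G
          by (rule polyS_pow, rule var_polyS, rule chn[OF that])
        define h where "h = (\<Prod>F\<in>FF. (var (ch F) :: 'a mpoly) ^ s)"
        have hS: "h \<in> polyS n" unfolding h_def
          by (rule polyS_prod[OF FFfin]) (rule pt)
        have "h * f \<in> I"
          unfolding memI
        proof (intro conjI ballI)
          show "h * f \<in> polyS n" using hS fS by (rule polyS_mult)
          fix F assume F: "F \<in> C_set n t"
          show "h * f \<in> QS n F s"
          proof (cases "F \<in> FF")
            case True
            have "h = (var (ch F)) ^ s * (\<Prod>G\<in>FF - {F}. (var (ch G) :: 'a mpoly) ^ s)"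
              unfolding h_def using prod.remove[OF FFfin True] by simp
            moreover have "(var (ch F) :: 'a mpoly) ^ s \<in> QS n F s"
              using var_pow_QS[OF CF(2)[OF F] conjunct1[OF ch[OF True]] chn[OF True]] .
            moreover have "(\<Prod>G\<in>FF - {F}. (var (ch G) :: 'a mpoly) ^ s) \<in> polyS n"
              by (rule polyS_prod) (use FFfin pt in auto)
            ultimately have "h \<in> QS n F s" using ideal_multR[OF QS_ideal] by metis
            then show ?thesis using ideal_multR[OF QS_ideal _ fS] by blast
          next
            case False
            then have "f \<in> QS n F s" using F unfolding FF_def by blast
            then show ?thesis using ideal_multL[OF QS_ideal _ hS] by blast
          qed
        qed
        then have "h \<in> P" using hS Pf by blast
        then obtain F where F: "F \<in> FF" "(var (ch F) :: 'a mpoly) ^ s \<in> P"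
          using prime_prod[OF P FFfin, of "\<lambda>F. var (ch F) ^ s"] pt
          unfolding h_def by blast
        then have "var (ch F) \<in> P" using prime_pow[OF P var_polyS[OF chn[OF F(1)]]] by blast
        then show False using ch[OF F(1)] by blast
      qed
      then obtain F where F: "F \<in> FF" "\<forall>i\<in>F. var i \<in> P" by blast
      have FC: "F \<in> C_set n t" and fF: "f \<notin> QS n F s" using F(1) unfolding FF_def by auto
      have "prime_of n F \<subseteq> P" unfolding prime_of_def
        by (rule gen_sub[OF Pid]) (use F(2) in blast)
      moreover have "P \<subseteq> prime_of n F"
      proof
        fix g assume "g \<in> P"
        then have gS: "g \<in> polyS n" and gf: "g * f \<in> I" using Pf by auto
        then have "g * f \<in> QS n F s" using memI FC by blast
        then have "g \<in> QS n F 1" using QS_primary[OF gS fS] fF by blast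
        then show "g \<in> prime_of n F" using POF[OF FC] by simp
      qed
      ultimately have "P = prime_of n F" by blast
      then show "P \<in> prime_of n ` C_set n t" using FC by blast
    qed
  next
    show "prime_of n ` C_set n t \<subseteq> Ass n I"
    proof
      fix P :: "'a mpoly set" assume "P \<in> prime_of n ` C_set n t"
      then obtain F where F: "F \<in> C_set n t" "P = prime_of n F" by blast
      have PQ: "P = QS n F 1" using POF[OF F(1)] F(2) by simp
      obtain f where fS: "f \<in> polyS n" and feq: "QS n F 1 = {g \<in> polyS n. g * f \<in> I}"
        using witness[OF t assms(3) F(1), where 'a='a] unfolding I_def by blast
      show "P \<in> Ass n I"
        unfolding Ass_def using QS_prime[of n F] PQ fS feq by blast
    qed
  qed
qed

end
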